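(* Every $3\times3\times3$ quaternion tensor $T$ satisfies $\mathrm{rank}(T)\le6$.
   Context: $\mathbb{H}$ denotes the real quaternions. An $n_1\times n_2\times n_3$ quaternion tensor is an array $T=(T_{ijk})$ with entries in $\mathbb{H}$, $1\le i\le n_1$, $1\le j\le n_2$, $1\le k\le n_3$; it is written $T=(A_1;\dots;A_{n_2})$ where the frontal slice $A_j$ is the $n_1\times n_3$ matrix $(T_{ijk})_{i,k}$. A nonzero tensor is simple if $T_{ijk}=a_ib_jc_k$ (quaternion product in this order) for some $\vec a\in\mathbb{H}^{n_1},\vec b\in\mathbb{H}^{n_2},\vec c\in\mathbb{H}^{n_3}$. The rank of $T$ is the least number of simple tensors summing to $T$ (the zero tensor has rank $0$). *)

theory Defs
  imports Main "HOL.Real"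
begin

datatype quat = Quat (Re: real) (Im1: real) (Im2: real) (Im3: real)

instantiation quat :: comm_monoid_add
begin
definition zero_quat :: quat where "zero_quat = Quat 0 0 0 0"
definition plus_quat :: "quat \<Rightarrow> quat \<Rightarrow> quat" where
  "plus_quat p q = Quat (Re p + Re q) (Im1 p + Im1 q) (Im2 p + Im2 q) (Im3 p + Im3 q)"
instance
  by standard (auto simp: zero_quat_def plus_quat_def algebra_simps)
end

instantiation quat :: times
begin
definition times_quat :: "quat \<Rightarrow> quat \<Rightarrow> quat" where
  "times_quat p q = Quat
     (Re p * Re q - Im1 p * Im1 q - Im2 p * Im2 q - Im3 p * Im3 q)
     (Re p * Im1 q + Im1 p * Re q + Im2 p * Im3 q - Im3 p * Im2 q)
     (Re p * Im2 q - Im1 p * Im3 q + Im2 p * Re q + Im3 p * Im1 q)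
     (Re p * Im3 q + Im1 p * Im2 q - Im2 p * Im1 q + Im3 p * Re q)"
instance ..
end

text \<open>An n1 x n2 x n3 quaternion tensor: entries T i j k for i < n1, j < n2, k < n3
  (0-based indices; values outside this range are irrelevant).\<close>

type_synonym qtensor = "nat \<Rightarrow> nat \<Rightarrow> nat \<Rightarrow> quat"

definition simple_qtensor :: "nat \<Rightarrow> nat \<Rightarrow> nat \<Rightarrow> qtensor \<Rightarrow> bool" where
  "simple_qtensor n1 n2 n3 T \<longleftrightarrow>
     (\<exists>i<n1. \<exists>j<n2. \<exists>k<n3. T i j k \<noteq> 0) \<and>
     (\<exists>a b c :: nat \<Rightarrow> quat. \<forall>i<n1. \<forall>j<n2. \<forall>k<n3. T i j k = a i * b j * c k)"

definition qtensor_rank :: "nat \<Rightarrow> nat \<Rightarrow> nat \<Rightarrow> qtensor \<Rightarrow> nat" where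
  "qtensor_rank n1 n2 n3 T = (LEAST r. \<exists>S :: nat \<Rightarrow> qtensor.
     (\<forall>l<r. simple_qtensor n1 n2 n3 (S l)) \<and>
     (\<forall>i<n1. \<forall>j<n2. \<forall>k<n3. T i j k = (\<Sum>l<r. S l i j k)))"

end

theory Submission
  imports Defs
begin


lemma quat_eq_iff: "a = b \<longleftrightarrow> Re a = Re b \<and> Im1 a = Im1 b \<and> Im2 a = Im2 b \<and> Im3 a = Im3 b"
  by (cases a; cases b) auto

lemma quat_zero_sel[simp]: "Re 0 = 0" "Im1 0 = 0" "Im2 0 = 0" "Im3 0 = 0"
  by (simp_all add: zero_quat_def)
lemma quat_plus_sel[simp]: "Re (a+b) = Re a + Re b" "Im1 (a+b) = Im1 a + Im1 b"
  "Im2 (a+b) = Im2 a + Im2 b" "Im3 (a+b) = Im3 a + Im3 b"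
  by (simp_all add: plus_quat_def)
lemma quat_times_sel[simp]:
  "Re (p*q) = Re p * Re q - Im1 p * Im1 q - Im2 p * Im2 q - Im3 p * Im3 q"
  "Im1 (p*q) = Re p * Im1 q + Im1 p * Re q + Im2 p * Im3 q - Im3 p * Im2 q"
  "Im2 (p*q) = Re p * Im2 q - Im1 p * Im3 q + Im2 p * Re q + Im3 p * Im1 q"
  "Im3 (p*q) = Re p * Im3 q + Im1 p * Im2 q - Im2 p * Im1 q + Im3 p * Re q"
  by (simp_all add: times_quat_def)

instantiation quat :: "{one, uminus, minus, inverse}"
begin
definition "one_quat = Quat 1 0 0 0"
definition "uminus_quat q = Quat (- Re q) (- Im1 q) (- Im2 q) (- Im3 q)"
definition "minus_quat p q = Quat (Re p - Re q) (Im1 p - Im1 q) (Im2 p - Im2 q) (Im3 p - Im3 q)"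
definition "inverse_quat q = (let n = (Re q)^2 + (Im1 q)^2 + (Im2 q)^2 + (Im3 q)^2 in
   Quat (Re q / n) (- Im1 q / n) (- Im2 q / n) (- Im3 q / n))"
definition "divide_quat p q = p * inverse (q::quat)"
instance ..
end

lemma quat_one_sel[simp]: "Re 1 = 1" "Im1 1 = 0" "Im2 1 = 0" "Im3 1 = 0"
  by (simp_all add: one_quat_def)
lemma quat_uminus_sel[simp]: "Re (-a) = - Re a" "Im1 (-a) = - Im1 a" "Im2 (-a) = - Im2 a" "Im3 (-a) = - Im3 a"
  by (simp_all add: uminus_quat_def)
lemma quat_minus_sel[simp]: "Re (a-b) = Re a - Re b" "Im1 (a-b) = Im1 a - Im1 b"
  "Im2 (a-b) = Im2 a - Im2 b" "Im3 (a-b) = Im3 a - Im3 b"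
  by (simp_all add: minus_quat_def)

lemma quat_norm_pos: "(q::quat) \<noteq> 0 \<Longrightarrow> (Re q)^2 + (Im1 q)^2 + (Im2 q)^2 + (Im3 q)^2 \<noteq> 0"
proof
  assume "q \<noteq> 0" and h: "(Re q)^2 + (Im1 q)^2 + (Im2 q)^2 + (Im3 q)^2 = 0"
  have "Re q = 0 \<and> Im1 q = 0 \<and> Im2 q = 0 \<and> Im3 q = 0"
    using h by (smt (verit) zero_le_power2 power2_eq_square mult_eq_0_iff sum_power2_eq_zero_iff)
  then have "q = 0" by (simp add: quat_eq_iff)
  with \<open>q \<noteq> 0\<close> show False by simp
qed

instance quat :: division_ring
proof
  fix a b c :: quat
  show "a * b * c = a * (b * c)" by (simp add: quat_eq_iff algebra_simps)
  show "1 * a = a" by (simp add: quat_eq_iff)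
  show "a * 1 = a" by (simp add: quat_eq_iff)
  show "(a + b) * c = a * c + b * c" by (simp add: quat_eq_iff algebra_simps)
  show "a * (b + c) = a * b + a * c" by (simp add: quat_eq_iff algebra_simps)
  show "- a + a = 0" by (simp add: quat_eq_iff)
  show "a - b = a + - b" by (simp add: quat_eq_iff)
  show "(0::quat) \<noteq> 1" by (simp add: quat_eq_iff)
  show "inverse (0::quat) = 0" by (simp add: quat_eq_iff inverse_quat_def Let_def)
  show "a / b = a * inverse b" by (simp add: divide_quat_def)
  assume "a \<noteq> 0"
  then have n: "(Re a)^2 + (Im1 a)^2 + (Im2 a)^2 + (Im3 a)^2 \<noteq> 0" by (rule quat_norm_pos)
  define n where "n = (Re a)^2 + (Im1 a)^2 + (Im2 a)^2 + (Im3 a)^2"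
  have n': "n \<noteq> 0" using n by (simp add: n_def)
  define m where "m = 1 / n"
  have iv: "inverse a = Quat (Re a * m) (- Im1 a * m) (- Im2 a * m) (- Im3 a * m)"
    by (simp add: inverse_quat_def Let_def n_def m_def)
  have e: "Re a * Re a * m + Im1 a * Im1 a * m + Im2 a * Im2 a * m + Im3 a * Im3 a * m = 1"
  proof -
    have "n * m = 1" using n' by (simp add: m_def)
    then show ?thesis unfolding n_def power2_eq_square by (simp add: algebra_simps)
  qed
  show "inverse a * a = 1"
    unfolding iv quat_eq_iff using e
    by (simp add: algebra_simps)
  show "a * inverse a = 1"
    unfolding iv quat_eq_iff using e
    by (simp add: algebra_simps)
qed



lemma decomp_aux:
  fixes a b c :: "nat \<Rightarrow> nat \<Rightarrow> quat"
  shows "(\<forall>i<n1. \<forall>j<n2. \<forall>k<n3. T i j k = (\<Sum>l<n. a l i * b l j * c l k)) \<Longrightarrow>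
    \<exists>r\<le>n. \<exists>S. (\<forall>l<r. simple_qtensor n1 n2 n3 (S l)) \<and>
       (\<forall>i<n1. \<forall>j<n2. \<forall>k<n3. T i j k = (\<Sum>l<r. S l i j k))"
proof (induction n arbitrary: T)
  case 0
  then show ?case by (intro exI[of _ 0]) auto
next
  case (Suc n)
  define T' where "T' = (\<lambda>i j k. \<Sum>l<n. a l i * b l j * c l k)"
  obtain r S where r: "r \<le> n" and S: "\<forall>l<r. simple_qtensor n1 n2 n3 (S l)"
    and T': "\<forall>i<n1. \<forall>j<n2. \<forall>k<n3. T' i j k = (\<Sum>l<r. S l i j k)"
    using Suc.IH[of T'] unfolding T'_def by blast
  define X where "X = (\<lambda>i j k. a n i * b n j * c n k)"
  have TX: "\<forall>i<n1. \<forall>j<n2. \<forall>k<n3. T i j k = T' i j k + X i j k"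
    using Suc.prems by (simp add: T'_def X_def)
  show ?case
  proof (cases "\<exists>i<n1. \<exists>j<n2. \<exists>k<n3. X i j k \<noteq> 0")
    case True
    then have sX: "simple_qtensor n1 n2 n3 X"
      unfolding simple_qtensor_def X_def by blast
    show ?thesis
    proof (intro exI[of _ "Suc r"] conjI exI[of _ "S(r := X)"])
      show "Suc r \<le> Suc n" using r by simp
      show "\<forall>l<Suc r. simple_qtensor n1 n2 n3 ((S(r := X)) l)" using S sX
        by (auto simp: less_Suc_eq)
      show "\<forall>i<n1. \<forall>j<n2. \<forall>k<n3. T i j k = (\<Sum>l<Suc r. (S(r := X)) l i j k)"
        using TX T' by simp
    qed
  next
    case False
    show ?thesis
      using TX T' False r S by (intro exI[of _ r]) auto
  qed
qed

lemma rank_le_of_decomp: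
  fixes a b c :: "nat \<Rightarrow> nat \<Rightarrow> quat"
  assumes "\<forall>i<n1. \<forall>j<n2. \<forall>k<n3. T i j k = (\<Sum>l<n. a l i * b l j * c l k)"
  shows "qtensor_rank n1 n2 n3 T \<le> n"
proof -
  obtain r S where r: "r \<le> n" and P: "(\<forall>l<r. simple_qtensor n1 n2 n3 (S l)) \<and>
       (\<forall>i<n1. \<forall>j<n2. \<forall>k<n3. T i j k = (\<Sum>l<r. S l i j k))"
    using decomp_aux[OF assms] by blast
  have "qtensor_rank n1 n2 n3 T \<le> r"
    unfolding qtensor_rank_def by (rule Least_le) (use P in blast)
  with r show ?thesis by simp
qed



definition inspan :: "(nat \<Rightarrow> quat) \<Rightarrow> (nat \<Rightarrow> nat \<Rightarrow> quat) \<Rightarrow> nat \<Rightarrow> bool" where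
  "inspan v R m \<longleftrightarrow> (\<exists>c. \<forall>k<3. v k = (\<Sum>l<m. c l * R l k))"

lemma inspan_row: "l < m \<Longrightarrow> inspan (R l) R m"
  unfolding inspan_def
proof (rule exI[of _ "\<lambda>i. if i = l then 1 else 0"], intro allI impI)
  fix k assume "l < m"
  have "(\<Sum>la<m. (if la = l then 1 else 0) * R la k) = (\<Sum>la<m. if la = l then R l k else 0)"
    by (rule sum.cong) auto
  also have "\<dots> = R l k" using \<open>l < m\<close> by simp
  finally show "R l k = (\<Sum>la<m. (if la = l then 1 else 0) * R la k)" by simp
qed

lemma inspan_zero: "inspan (\<lambda>_. 0) R m"
  unfolding inspan_def by (rule exI[of _ "\<lambda>_. 0"]) simp

lemma inspan_cong: "(\<And>k. k < 3 \<Longrightarrow> v k = w k) \<Longrightarrow> inspan w R m \<Longrightarrow> inspan v R m"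
  unfolding inspan_def by auto

lemma inspan_add: "inspan v R m \<Longrightarrow> inspan w R m \<Longrightarrow> inspan (\<lambda>k. v k + w k) R m"
  unfolding inspan_def
proof (elim exE)
  fix c d assume c: "\<forall>k<3. v k = (\<Sum>l<m. c l * R l k)" and d: "\<forall>k<3. w k = (\<Sum>l<m. d l * R l k)"
  show "\<exists>e. \<forall>k<3. v k + w k = (\<Sum>l<m. e l * R l k)"
    by (rule exI[of _ "\<lambda>l. c l + d l"]) (simp add: c d distrib_right sum.distrib)
qed

lemma inspan_smult: "inspan v R m \<Longrightarrow> inspan (\<lambda>k. s * v k) R m"
  unfolding inspan_def
proof (elim exE)
  fix c assume c: "\<forall>k<3. v k = (\<Sum>l<m. c l * R l k)"
  show "\<exists>e. \<forall>k<3. s * v k = (\<Sum>l<m. e l * R l k)"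
    by (rule exI[of _ "\<lambda>l. s * c l"]) (simp add: c sum_distrib_left mult.assoc)
qed

lemma inspan_neg: "inspan v R m \<Longrightarrow> inspan (\<lambda>k. - v k) R m"
  using inspan_smult[of v R m "-1"] by simp

lemma inspan_diff: "inspan v R m \<Longrightarrow> inspan w R m \<Longrightarrow> inspan (\<lambda>k. v k - w k) R m"
  using inspan_add[of v R m "\<lambda>k. - w k"] inspan_neg[of w R m] by simp

lemma inspan_sum: "finite A \<Longrightarrow> (\<And>t. t \<in> A \<Longrightarrow> inspan (f t) R m) \<Longrightarrow> inspan (\<lambda>k. \<Sum>t\<in>A. f t k) R m"
proof (induction A rule: finite_induct)
  case empty
  then show ?case using inspan_zero by simp
next
  case (insert x F)
  then show ?case using inspan_add[of "f x" R m "\<lambda>k. \<Sum>t\<in>F. f t k"] by simp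
qed

lemma inspan_trans:
  assumes S: "\<forall>l<m'. inspan (S l) R m" and v: "inspan v S m'"
  shows "inspan v R m"
proof -
  obtain c where c: "\<forall>k<3. v k = (\<Sum>l<m'. c l * S l k)" using v unfolding inspan_def by blast
  have "inspan (\<lambda>k. \<Sum>l\<in>{..<m'}. c l * S l k) R m"
    by (rule inspan_sum) (use S inspan_smult in auto)
  then show ?thesis by (rule inspan_cong[rotated]) (use c in auto)
qed

definition ev :: "nat \<Rightarrow> nat \<Rightarrow> quat" where "ev t k = (if k = t then 1 else 0)"

lemma elim_lemma:
  "P \<subseteq> {..<3} \<Longrightarrow> (\<forall>l<m. \<forall>k<3. k \<notin> P \<longrightarrow> R l k = 0) \<Longrightarrow>
   (\<forall>t\<in>P. inspan (ev t) R m) \<or> (\<exists>S. \<forall>l<m. inspan (R l) S (card P - 1))"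
proof (induction "card P" arbitrary: P R rule: less_induct)
  case less
  have finP: "finite P" using less.prems(1) finite_subset by blast
  show ?case
  proof (cases "\<forall>l<m. \<forall>k<3. R l k = 0")
    case True
    then show ?thesis
      by (intro disjI2 exI[of _ R] allI impI) (rule inspan_cong[OF _ inspan_zero], auto)
  next
    case False
    then obtain l0 p where l0: "l0 < m" and p3: "p < 3" and vp: "R l0 p \<noteq> 0" by blast
    have pP: "p \<in> P" using less.prems(2) l0 p3 vp by blast
    define v where "v = R l0"
    define R' where "R' = (\<lambda>l k. R l k - (R l p * inverse (v p)) * v k)"
    have vp': "v p \<noteq> 0" using vp by (simp add: v_def)
    have R'span: "\<forall>l<m. inspan (R' l) R m"
    proof (intro allI impI)
      fix l assume "l < m"
      have "inspan (\<lambda>k. R l k - (R l p * inverse (v p)) * v k) R m"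
        by (rule inspan_diff[OF inspan_row[OF \<open>l < m\<close>] inspan_smult])
           (simp add: v_def inspan_row[OF l0])
      then show "inspan (R' l) R m" by (simp add: R'_def)
    qed
    have vspan: "inspan v R m" using inspan_row[OF l0] by (simp add: v_def)
    have supp': "\<forall>l<m. \<forall>k<3. k \<notin> P - {p} \<longrightarrow> R' l k = 0"
    proof (intro allI impI)
      fix l k assume "l < m" "k < 3" "k \<notin> P - {p}"
      then consider "k = p" | "k \<notin> P" by blast
      then show "R' l k = 0"
      proof cases
        case 1 then show ?thesis using vp' by (simp add: R'_def mult.assoc)
      next
        case 2 then show ?thesis using less.prems(2) \<open>l < m\<close> \<open>k < 3\<close> l0
          by (simp add: R'_def v_def)
      qed
    qed
    have cardlt: "card (P - {p}) < card P" by (rule card_Diff1_less[OF finP pP])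
    have IH: "(\<forall>t\<in>P - {p}. inspan (ev t) R' m) \<or> (\<exists>S. \<forall>l<m. inspan (R' l) S (card (P - {p}) - 1))"
      using less.hyps[OF cardlt, of R'] less.prems(1) supp' by blast
    show ?thesis
    proof (cases "\<forall>t\<in>P - {p}. inspan (ev t) R' m")
      case True
      then have other: "\<forall>t\<in>P - {p}. inspan (ev t) R m"
        using inspan_trans R'span by blast
      have evp: "inspan (ev p) R m"
      proof -
        have s: "inspan (\<lambda>k. \<Sum>t\<in>P - {p}. v t * ev t k) R m"
          by (rule inspan_sum) (use finP other inspan_smult in auto)
        have "inspan (\<lambda>k. inverse (v p) * (v k - (\<Sum>t\<in>P - {p}. v t * ev t k))) R m"
          by (rule inspan_smult, rule inspan_diff[OF vspan s])
        then show ?thesis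
        proof (rule inspan_cong[rotated])
          fix k :: nat assume k3: "k < 3"
          show "ev p k = inverse (v p) * (v k - (\<Sum>t\<in>P - {p}. v t * ev t k))"
          proof (cases "k = p")
            case True
            then show ?thesis using vp' by (simp add: ev_def)
          next
            case False
            show ?thesis
            proof (cases "k \<in> P")
              case True
              have "(\<Sum>t\<in>P - {p}. v t * ev t k) = (\<Sum>t\<in>P - {p}. if t = k then v k else 0)"
                by (rule sum.cong) (auto simp: ev_def)
              also have "\<dots> = v k" using True \<open>k \<noteq> p\<close> finP by simp
              finally show ?thesis using \<open>k \<noteq> p\<close> by (simp add: ev_def)
            next
              case False
              have "(\<Sum>t\<in>P - {p}. v t * ev t k) = 0"
                by (rule sum.neutral) (use False in \<open>auto simp: ev_def\<close>)
              moreover have "v k = 0" using less.prems(2) l0 k3 False by (simp add: v_def)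
              ultimately show ?thesis using \<open>k \<noteq> p\<close> by (simp add: ev_def)
            qed
          qed
        qed
      qed
      show ?thesis using other evp by blast
    next
      case False
      then obtain S' where S': "\<forall>l<m. inspan (R' l) S' (card (P - {p}) - 1)" using IH by blast
      from False have ne: "P - {p} \<noteq> {}" by blast
      then have c2: "card (P - {p}) \<ge> 1" using finP by (simp add: Suc_leI card_gt_0_iff)
      define n where "n = card (P - {p}) - 1"
      have cP: "card P - 1 = Suc n" using c2 cardlt finP pP by (simp add: n_def card_Diff_singleton)
      define S where "S = (\<lambda>l. if l < n then S' l else v)"
      have "\<forall>l<m. inspan (R l) S (Suc n)"
      proof (intro allI impI)
        fix l assume "l < m"
        obtain c where c: "\<forall>k<3. R' l k = (\<Sum>i<n. c i * S' i k)"
          using S' \<open>l < m\<close> unfolding inspan_def n_def by blast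
        show "inspan (R l) S (Suc n)"
          unfolding inspan_def
        proof (rule exI[of _ "c(n := R l p * inverse (v p))"], intro allI impI)
          fix k :: nat assume "k < 3"
          have "(\<Sum>i<Suc n. (c(n := R l p * inverse (v p))) i * S i k)
              = (\<Sum>i<n. c i * S' i k) + R l p * inverse (v p) * v k"
            by (simp add: S_def)
          also have "\<dots> = R l k" using c \<open>k < 3\<close> by (simp add: R'_def) (metis diff_add_cancel)
          finally show "R l k = (\<Sum>i<Suc n. (c(n := R l p * inverse (v p))) i * S i k)" by simp
        qed
      qed
      then show ?thesis using cP by auto
    qed
  qed
qed

lemma dichotomy:
  fixes A :: "nat \<Rightarrow> nat \<Rightarrow> quat"
  shows "(\<exists>B. \<forall>i<3. \<forall>k<3. (\<Sum>l<3. B i l * A l k) = ev i k) \<or>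
         (\<exists>L S. \<forall>i<3. \<forall>k<3. A i k = (\<Sum>m<(2::nat). L i m * S m k))"
proof -
  have "(\<forall>t\<in>{..<3::nat}. inspan (ev t) A 3) \<or> (\<exists>S. \<forall>l<3. inspan (A l) S (card {..<3::nat} - 1))"
    by (rule elim_lemma) auto
  then show ?thesis
  proof
    assume "\<forall>t\<in>{..<3::nat}. inspan (ev t) A 3"
    then have "\<forall>t. \<exists>c. t < 3 \<longrightarrow> (\<forall>k<3. ev t k = (\<Sum>l<3. c l * A l k))"
      unfolding inspan_def by auto
    then obtain B where "\<forall>t. t < 3 \<longrightarrow> (\<forall>k<3. ev t k = (\<Sum>l<3. B t l * A l k))"
      by metis
    then show ?thesis by auto
  next
    assume "\<exists>S. \<forall>l<3. inspan (A l) S (card {..<3::nat} - 1)"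
    then obtain S where "\<forall>l<3. inspan (A l) S 2" by auto
    then have "\<forall>l. \<exists>c. l < 3 \<longrightarrow> (\<forall>k<3. A l k = (\<Sum>m<2. c m * S m k))"
      unfolding inspan_def by auto
    then obtain L where "\<forall>l. l < 3 \<longrightarrow> (\<forall>k<3. A l k = (\<Sum>m<2. L l m * S m k))"
      by metis
    then show ?thesis by auto
  qed
qed



lemma sum3: "(\<Sum>l<(3::nat). f l) = f 0 + f 1 + f 2"
  by (simp add: eval_nat_numeral)
lemma sum2: "(\<Sum>l<(2::nat). f l) = f 0 + f 1"
  by (simp add: eval_nat_numeral)
lemma all3: "(\<forall>i<(3::nat). Q i) = (Q 0 \<and> Q 1 \<and> Q 2)"
  by (auto simp: less_Suc_eq eval_nat_numeral)
lemma less3_cases: "i < (3::nat) \<Longrightarrow> i = 0 \<or> i = 1 \<or> i = 2"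
  by auto

lemma schur_diag:
  fixes N :: "nat \<Rightarrow> nat \<Rightarrow> quat"
  shows "\<exists>G L R. \<forall>i<3. \<forall>k<3. N i k = (\<Sum>m<(2::nat). L i m * R m k) + (if i = k then G i else 0)"
proof -
  define \<beta> where "\<beta> = N 0 2 - N 0 1 * N 1 2"
  define \<alpha> where "\<alpha> = N 0 1 - \<beta> * N 2 1"
  define G where "G = (\<lambda>i::nat. if i = 0 then N 0 0 - \<alpha> * N 1 0 - \<beta> * N 2 0
      else if i = 1 then N 1 1 - 1 else N 2 2 - 1 - N 2 1 * N 1 2)"
  define L where "L = (\<lambda>(i::nat) (m::nat). if i = 0 then (if m = 0 then \<alpha> else \<beta>)
      else if i = 1 then (if m = 0 then 1 else 0) else (if m = 0 then 0 else 1))"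
  define R where "R = (\<lambda>(m::nat) (k::nat). if m = 0 then (if k = 0 then N 1 0 else if k = 1 then 1 else N 1 2)
      else (if k = 0 then N 2 0 else if k = 1 then N 2 1 else 1 + N 2 1 * N 1 2))"
  have "\<forall>i<3. \<forall>k<3. N i k = (\<Sum>m<(2::nat). L i m * R m k) + (if i = k then G i else 0)"
  proof (intro allI impI)
    fix i k :: nat assume "i < 3" "k < 3"
    then consider "i = 0" | "i = 1" | "i = 2" by linarith
    then show "N i k = (\<Sum>m<(2::nat). L i m * R m k) + (if i = k then G i else 0)"
    proof cases
      case 1
      from \<open>k < 3\<close> consider "k = 0" | "k = 1" | "k = 2" by linarith
      then show ?thesis
      proof cases
        case 1 then show ?thesis using \<open>i = 0\<close> by (simp add: sum2 L_def R_def G_def)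
      next
        case 2 then show ?thesis using \<open>i = 0\<close> by (simp add: sum2 L_def R_def G_def \<alpha>_def)
      next
        case 3 then show ?thesis using \<open>i = 0\<close>
          by (simp add: sum2 L_def R_def G_def \<alpha>_def \<beta>_def algebra_simps)
      qed
    next
      case 2
      from \<open>k < 3\<close> consider "k = 0" | "k = 1" | "k = 2" by linarith
      then show ?thesis using \<open>i = 1\<close> by cases (simp_all add: sum2 L_def R_def G_def)
    next
      case 3
      from \<open>k < 3\<close> consider "k = 0" | "k = 1" | "k = 2" by linarith
      then show ?thesis using \<open>i = 2\<close> by cases (simp_all add: sum2 L_def R_def G_def)
    qed
  qed
  then show ?thesis by blast
qed


lemma tri_diag:
  fixes Z :: "nat \<Rightarrow> nat \<Rightarrow> quat" and d0 d1 d2 :: quat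
  assumes z: "Z 1 0 = 0" "Z 2 0 = 0" "Z 2 1 = 0" "Z 0 0 = d0" "Z 1 1 = d1" "Z 2 2 = d2"
    and d: "d0 \<noteq> d1" "d1 \<noteq> d2" "d0 \<noteq> d2"
    and c0: "\<And>q. d0 * q = q * d0" and c2: "\<And>q. d2 * q = q * d2"
  shows "\<exists>U V. (\<forall>i<3. \<forall>k<3. (\<Sum>l<(3::nat). U i l * V l k) = ev i k) \<and>
     (\<forall>i<3. \<forall>k<3. (\<Sum>l<3. Z i l * U l k) = U i k * (if k = 0 then d0 else if k = 1 then d1 else d2))"
proof -
  define p where "p = - Z 0 1 * inverse (d0 - d1)"
  define q where "q = - inverse (d1 - d2) * Z 1 2"
  define p' where "p' = - (Z 0 1 * q + Z 0 2) * inverse (d0 - d2)"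
  have hp: "p * (d0 - d1) = - Z 0 1" using d(1) by (simp add: p_def mult.assoc)
  have hq: "(d1 - d2) * q = - Z 1 2" using d(2) by (simp add: q_def mult.assoc[symmetric])
  have hp': "p' * (d0 - d2) = - (Z 0 1 * q + Z 0 2)" using d(3) by (simp add: p'_def mult.assoc)
  have e1: "d0 * p + Z 0 1 = p * d1"
  proof -
    have "p * d0 - p * d1 = - Z 0 1" using hp by (simp add: algebra_simps)
    then show ?thesis by (simp add: c0 algebra_simps)
  qed
  have e2: "d1 * q + Z 1 2 = q * d2"
  proof -
    have "d1 * q - d2 * q = - Z 1 2" using hq by (simp add: algebra_simps)
    then show ?thesis by (simp add: c2[symmetric] algebra_simps)
  qed
  have e3: "d0 * p' + Z 0 1 * q + Z 0 2 = p' * d2"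
  proof -
    have "p' * d0 - p' * d2 = - (Z 0 1 * q + Z 0 2)" using hp' by (simp add: algebra_simps)
    then show ?thesis by (simp add: c0 algebra_simps)
  qed
  define U where "U = (\<lambda>(i::nat) (k::nat). if i = 0 then (if k = 0 then 1 else if k = 1 then p else p')
     else if i = 1 then (if k = 0 then 0 else if k = 1 then 1 else q) else (if k = 2 then 1 else 0))"
  define V where "V = (\<lambda>(i::nat) (k::nat). if i = 0 then (if k = 0 then 1 else if k = 1 then -p else p * q - p')
     else if i = 1 then (if k = 0 then 0 else if k = 1 then 1 else -q) else (if k = 2 then 1 else 0))"
  have UV: "\<forall>i<3. \<forall>k<3. (\<Sum>l<3. U i l * V l k) = ev i k"
    unfolding all3 sum3 ev_def U_def V_def by simp
  have ZU: "\<forall>i<3. \<forall>k<3. (\<Sum>l<3. Z i l * U l k) = U i k * (if k = 0 then d0 else if k = 1 then d1 else d2)"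
    unfolding all3 using e1 e2 e3 z by (simp add: sum3 U_def)
  show ?thesis using UV ZU by blast
qed




lemma from_tri:
  fixes Z U V :: "nat \<Rightarrow> nat \<Rightarrow> quat" and D :: "nat \<Rightarrow> quat"
  assumes UV: "\<forall>i<3. \<forall>k<3. (\<Sum>l<3. U i l * V l k) = ev i k"
    and ZU: "\<forall>i<3. \<forall>k<3. (\<Sum>l<3. Z i l * U l k) = U i k * D k"
    and i: "i < 3" and k: "k < 3"
  shows "(\<Sum>l<3. U i l * D l * V l k) = Z i k"
proof -
  have "(\<Sum>l<3. U i l * D l * V l k) = (\<Sum>l<3. (\<Sum>m<3. Z i m * U m l) * V l k)"
    by (rule sum.cong) (use ZU i in auto)
  also have "\<dots> = (\<Sum>l<3. \<Sum>m<3. Z i m * (U m l * V l k))"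
    by (simp add: sum_distrib_right mult.assoc)
  also have "\<dots> = (\<Sum>m<3. \<Sum>l<3. Z i m * (U m l * V l k))"
    by (rule sum.swap)
  also have "\<dots> = (\<Sum>m<3. Z i m * (\<Sum>l<3. U m l * V l k))"
    by (simp add: sum_distrib_left)
  also have "\<dots> = (\<Sum>m<3. Z i m * ev m k)"
    by (rule sum.cong) (use UV k in auto)
  also have "\<dots> = Z i k" using k by (simp add: sum3 ev_def) (auto simp: eval_nat_numeral less_Suc_eq)
  finally show ?thesis .
qed

lemma of_nat_quat: "(of_nat n :: quat) = Quat (real n) 0 0 0"
  by (induction n) (simp_all add: quat_eq_iff)

lemma exists_d: "\<exists>d0 d2 :: quat. d0 \<noteq> d1 \<and> d2 \<noteq> d1 \<and> d0 \<noteq> d2 \<and>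
   (\<forall>q. d0 * q = q * d0) \<and> (\<forall>q. d2 * q = q * d2)"
proof -
  have c2: "\<forall>q. 2 * q = q * (2::quat)"
  proof
    fix q :: quat show "2 * q = q * 2" using mult_of_nat_commute[of 2 q] by simp
  qed
  have two: "(2::quat) = Quat 2 0 0 0" using of_nat_quat[of 2] by simp
  have n: "(0::quat) \<noteq> 1" "(0::quat) \<noteq> 2" "(1::quat) \<noteq> 2"
    by (simp_all add: quat_eq_iff two)
  show ?thesis
  proof (cases "d1 = 0")
    case True
    then show ?thesis using c2 n by (intro exI[of _ 1] exI[of _ 2]) auto
  next
    case False
    show ?thesis
    proof (cases "d1 = 1")
      case True
      then show ?thesis using c2 n by (intro exI[of _ 0] exI[of _ 2]) auto
    next
      case F2: False
      then show ?thesis using False n by (intro exI[of _ 0] exI[of _ 1]) auto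
    qed
  qed
qed

lemma diag_rank1_core:
  fixes M :: "nat \<Rightarrow> nat \<Rightarrow> quat"
  assumes c: "M 2 0 \<noteq> 0"
  shows "\<exists>U V D x y. (\<forall>i<3. \<forall>k<3. (\<Sum>l<(3::nat). U i l * V l k) = ev i k) \<and>
     (\<forall>i<3. \<forall>k<3. M i k = (\<Sum>l<(3::nat). U i l * D l * V l k) + x i * y k)"
proof -
  define d1 where "d1 = M 1 1 - M 1 0 * inverse (M 2 0) * M 2 1"
  obtain d0 d2 where d: "d0 \<noteq> d1" "d2 \<noteq> d1" "d0 \<noteq> d2" and c0: "\<forall>q. d0 * q = q * d0"
    and c2: "\<forall>q. d2 * q = q * d2" using exists_d[of d1] by blast
  define x where "x = (\<lambda>i::nat. if i = 0 then M 0 0 - d0 else if i = 1 then M 1 0 else M 2 0)"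
  define y where "y = (\<lambda>k::nat. if k = 0 then 1 else if k = 1 then inverse (M 2 0) * M 2 1
      else inverse (M 2 0) * (M 2 2 - d2))"
  define Z where "Z = (\<lambda>i k. M i k - x i * y k)"
  have z: "Z 1 0 = 0" "Z 2 0 = 0" "Z 2 1 = 0" "Z 0 0 = d0" "Z 1 1 = d1" "Z 2 2 = d2"
    using c by (simp_all add: Z_def x_def y_def d1_def mult.assoc[symmetric])
  define D where "D = (\<lambda>k::nat. if k = 0 then d0 else if k = 1 then d1 else d2)"
  obtain U V where UV: "\<forall>i<3. \<forall>k<3. (\<Sum>l<3. U i l * V l k) = ev i k"
    and ZU: "\<forall>i<3. \<forall>k<3. (\<Sum>l<3. Z i l * U l k) = U i k * D k"
    using tri_diag[OF z d(1) d(2)[symmetric] d(3)] c0 c2 unfolding D_def by blast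
  have "\<forall>i<3. \<forall>k<3. M i k = (\<Sum>l<3. U i l * D l * V l k) + x i * y k"
  proof (intro allI impI)
    fix i k :: nat assume "i < 3" "k < 3"
    have "(\<Sum>l<3. U i l * D l * V l k) = M i k - x i * y k"
      using from_tri[OF UV ZU \<open>i < 3\<close> \<open>k < 3\<close>] by (simp add: Z_def)
    then show "M i k = (\<Sum>l<3. U i l * D l * V l k) + x i * y k" by (metis eq_diff_eq)
  qed
  then show ?thesis
    by (intro exI[of _ U] exI[of _ V] exI[of _ D] exI[of _ x] exI[of _ y] conjI UV)
qed


lemma perm_facts:
  fixes p q i :: nat
  assumes "p < 3" "q < 3" "p \<noteq> q" "i < 3"
  shows "(if i = p then 2 else if i = q then 0 else 1) < (3::nat)"
    "(let t = (if i = p then 2 else if i = q then (0::nat) else 1) in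
       if t = 2 then p else if t = 0 then q else 3 - p - q) = i"
  using assms less3_cases[of p] less3_cases[of q] less3_cases[of i] by (auto simp: Let_def)

lemma diag_rank1:
  fixes M :: "nat \<Rightarrow> nat \<Rightarrow> quat"
  shows "\<exists>U V D x y. (\<forall>i<3. \<forall>k<3. (\<Sum>l<(3::nat). U i l * V l k) = ev i k) \<and>
     (\<forall>i<3. \<forall>k<3. M i k = (\<Sum>l<(3::nat). U i l * D l * V l k) + x i * y k)"
proof (cases "\<forall>i<3. \<forall>k<3. i \<noteq> k \<longrightarrow> M i k = 0")
  case True
  have "\<forall>i<3. \<forall>k<3. M i k = (\<Sum>l<3. ev i l * M l l * ev l k) + 0 * 0"
    using True unfolding all3 by (simp add: sum3 ev_def)
  moreover have "\<forall>i<3. \<forall>k<3. (\<Sum>l<3. ev i l * ev l k) = ev i k"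
    unfolding all3 by (simp add: sum3 ev_def)
  ultimately show ?thesis
    by (intro exI[of _ ev] exI[of _ ev] exI[of _ "\<lambda>l. M l l"] exI[of _ "\<lambda>_. 0"] exI[of _ "\<lambda>_. 0"] conjI)
next
  case False
  then obtain p q where pq: "p < 3" "q < 3" "p \<noteq> q" "M p q \<noteq> 0" by blast
  define \<tau> where "\<tau> = (\<lambda>i::nat. if i = p then 2 else if i = q then (0::nat) else 1)"
  define \<sigma> where "\<sigma> = (\<lambda>t::nat. if t = 2 then p else if t = 0 then q else 3 - p - q)"
  have \<tau>3: "\<tau> i < 3" if "i < 3" for i using perm_facts(1)[OF pq(1-3) that] by (simp add: \<tau>_def)
  have \<sigma>\<tau>: "\<sigma> (\<tau> i) = i" if "i < 3" for i using perm_facts(2)[OF pq(1-3) that]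
    by (simp add: \<tau>_def \<sigma>_def Let_def)
  have evt: "ev (\<tau> i) (\<tau> k) = ev i k" if "i < 3" "k < 3" for i k
    using \<sigma>\<tau>[OF that(1)] \<sigma>\<tau>[OF that(2)] by (auto simp: ev_def)
  define M' where "M' = (\<lambda>a b. M (\<sigma> a) (\<sigma> b))"
  have "M' 2 0 \<noteq> 0" using pq by (simp add: M'_def \<sigma>_def)
  then obtain U V D x y where UV: "\<forall>i<3. \<forall>k<3. (\<Sum>l<(3::nat). U i l * V l k) = ev i k"
    and MM: "\<forall>i<3. \<forall>k<3. M' i k = (\<Sum>l<(3::nat). U i l * D l * V l k) + x i * y k"
    using diag_rank1_core[of M'] by blast
  have "\<forall>i<3. \<forall>k<3. (\<Sum>l<3. U (\<tau> i) l * V l (\<tau> k)) = ev i k"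
    using UV \<tau>3 evt by simp
  moreover have "\<forall>i<3. \<forall>k<3. M i k = (\<Sum>l<3. U (\<tau> i) l * D l * V l (\<tau> k)) + x (\<tau> i) * y (\<tau> k)"
  proof (intro allI impI)
    fix i k :: nat assume "i < 3" "k < 3"
    have "M i k = M' (\<tau> i) (\<tau> k)" using \<sigma>\<tau> \<open>i < 3\<close> \<open>k < 3\<close> by (simp add: M'_def)
    then show "M i k = (\<Sum>l<3. U (\<tau> i) l * D l * V l (\<tau> k)) + x (\<tau> i) * y (\<tau> k)"
      using MM \<tau>3 \<open>i < 3\<close> \<open>k < 3\<close> by simp
  qed
  ultimately show ?thesis
    by (intro exI[of _ "\<lambda>i l. U (\<tau> i) l"] exI[of _ "\<lambda>l k. V l (\<tau> k)"] exI[of _ D]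
        exI[of _ "\<lambda>i. x (\<tau> i)"] exI[of _ "\<lambda>k. y (\<tau> k)"] conjI)
qed



definition mm :: "nat \<Rightarrow> (nat \<Rightarrow> nat \<Rightarrow> quat) \<Rightarrow> (nat \<Rightarrow> nat \<Rightarrow> quat) \<Rightarrow> nat \<Rightarrow> nat \<Rightarrow> quat" where
  "mm n X Y = (\<lambda>i k. \<Sum>l<n. X i l * Y l k)"

definition beq :: "(nat \<Rightarrow> nat \<Rightarrow> quat) \<Rightarrow> (nat \<Rightarrow> nat \<Rightarrow> quat) \<Rightarrow> bool" where
  "beq X Y \<longleftrightarrow> (\<forall>i<3. \<forall>k<3. X i k = Y i k)"

lemma mm_assoc: "mm n (mm m X Y) Z = mm m X (mm n Y Z)"
proof (intro ext)
  fix i k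
  have "mm n (mm m X Y) Z i k = (\<Sum>l<n. \<Sum>j<m. X i j * (Y j l * Z l k))"
    by (simp add: mm_def sum_distrib_right mult.assoc)
  also have "\<dots> = (\<Sum>j<m. \<Sum>l<n. X i j * (Y j l * Z l k))" by (rule sum.swap)
  also have "\<dots> = mm m X (mm n Y Z) i k" by (simp add: mm_def sum_distrib_left)
  finally show "mm n (mm m X Y) Z i k = mm m X (mm n Y Z) i k" .
qed

lemma beq_refl: "beq X X" by (simp add: beq_def)
lemma beq_sym: "beq X Y \<Longrightarrow> beq Y X" by (simp add: beq_def)
lemma beq_trans: "beq X Y \<Longrightarrow> beq Y Z \<Longrightarrow> beq X Z" by (simp add: beq_def)
lemma beqD: "beq X Y \<Longrightarrow> i < 3 \<Longrightarrow> k < 3 \<Longrightarrow> X i k = Y i k" by (simp add: beq_def)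

lemma mm_beq: "beq X X' \<Longrightarrow> beq Y Y' \<Longrightarrow> n \<le> 3 \<Longrightarrow> beq (mm n X Y) (mm n X' Y')"
  unfolding beq_def mm_def by (auto intro!: sum.cong)

lemma mm_ev_l: "beq (mm 3 ev X) X"
  unfolding beq_def mm_def all3 by (simp add: sum3 ev_def)
lemma mm_ev_r: "beq (mm 3 X ev) X"
  unfolding beq_def mm_def all3 by (simp add: sum3 ev_def)

lemma mm_add_l: "mm n (\<lambda>i l. X i l + Y i l) Z = (\<lambda>i k. mm n X Z i k + mm n Y Z i k)"
  by (simp add: mm_def distrib_right sum.distrib)

lemma sum6: "(\<Sum>l<(6::nat). f l) = (\<Sum>l<3. f l) + f 3 + f 4 + f 5"
  by (simp add: eval_nat_numeral)

lemma assemble: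
  fixes A A' A'' B :: "nat \<Rightarrow> nat \<Rightarrow> quat"
  assumes BA: "\<forall>i<3. \<forall>k<3. (\<Sum>l<3. B i l * A l k) = ev i k"
  shows "\<exists>(a::nat \<Rightarrow> nat \<Rightarrow> quat) (b::nat \<Rightarrow> nat \<Rightarrow> quat) (c::nat \<Rightarrow> nat \<Rightarrow> quat). \<forall>i<3. \<forall>k<3.
     A i k = (\<Sum>l<6. a l i * b l 0 * c l k) \<and> A' i k = (\<Sum>l<6. a l i * b l 1 * c l k) \<and>
     A'' i k = (\<Sum>l<6. a l i * b l 2 * c l k)"
proof -
  have BA': "beq (mm 3 B A) ev" using BA by (simp add: beq_def mm_def)
  define M where "M = mm 3 A' B"
  obtain U V D x y where UV0: "\<forall>i<3. \<forall>k<3. (\<Sum>l<(3::nat). U i l * V l k) = ev i k"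
    and MM0: "\<forall>i<3. \<forall>k<3. M i k = (\<Sum>l<(3::nat). U i l * D l * V l k) + x i * y k"
    using diag_rank1[of M] by blast
  have UV: "beq (mm 3 U V) ev" using UV0 by (simp add: beq_def mm_def)
  define UD where "UD = (\<lambda>i l. U i l * D l)"
  define XY where "XY = (\<lambda>i m. x i * y m)"
  have MM: "beq M (\<lambda>i m. mm 3 UD V i m + XY i m)" using MM0 by (simp add: beq_def mm_def UD_def XY_def)
  define N where "N = mm 3 (mm 3 (mm 3 V A'') B) U"
  obtain G L R where GLR: "\<forall>i<3. \<forall>k<3. N i k = (\<Sum>m<(2::nat). L i m * R m k) + (if i = k then G i else 0)"
    using schur_diag[of N] by blast
  define Gd where "Gd = (\<lambda>l n. if l = n then G l else (0::quat))"
  have NN: "beq N (\<lambda>l n. Gd l n + mm 2 L R l n)" using GLR by (simp add: beq_def mm_def Gd_def add.commute)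
  define a where "a = (\<lambda>(l::nat) (i::nat). if l < 3 then U i l else if l = 3 then x i else mm 3 U L i (l - 4))"
  define b where "b = (\<lambda>(l::nat) (j::nat). if l < 3 then (if j = 0 then 1 else if j = 1 then D l else G l)
     else if l = 3 then (if j = 1 then 1 else 0) else (if j = 2 then 1 else (0::quat)))"
  define c where "c = (\<lambda>(l::nat) (k::nat). if l < 3 then mm 3 V A l k else if l = 3 then (\<Sum>m<3. y m * A m k)
     else mm 3 (mm 3 R V) A (l - 4) k)"
  have s0: "(\<Sum>l<6. a l i * b l 0 * c l k) = mm 3 U (mm 3 V A) i k" for i k
    by (simp add: sum6 a_def b_def c_def mm_def)
  have s1: "(\<Sum>l<6. a l i * b l 1 * c l k) = mm 3 UD (mm 3 V A) i k + mm 3 XY A i k" for i k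
    by (simp add: sum6 a_def b_def c_def mm_def UD_def XY_def sum_distrib_left mult.assoc)
  define UG where "UG = (\<lambda>i l. U i l * G l)"
  have s2: "(\<Sum>l<6. a l i * b l 2 * c l k) = mm 3 UG (mm 3 V A) i k + mm 2 (mm 3 U L) (mm 3 (mm 3 R V) A) i k" for i k
    by (simp add: sum6 a_def b_def c_def UG_def) (simp add: mm_def sum2)
  have "\<forall>i<3. \<forall>k<3. A i k = (\<Sum>l<6. a l i * b l 0 * c l k)"
  proof (intro allI impI)
    fix i k :: nat assume ik: "i < 3" "k < 3"
    have "mm 3 U (mm 3 V A) i k = mm 3 (mm 3 U V) A i k" by (simp add: mm_assoc)
    also have "\<dots> = mm 3 ev A i k" using mm_beq[OF UV beq_refl, of 3 A] ik by (simp add: beq_def)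
    also have "\<dots> = A i k" using mm_ev_l ik by (simp add: beq_def)
    finally show "A i k = (\<Sum>l<6. a l i * b l 0 * c l k)" using s0 by simp
  qed
  moreover have "\<forall>i<3. \<forall>k<3. A' i k = (\<Sum>l<6. a l i * b l 1 * c l k)"
  proof (intro allI impI)
    fix i k :: nat assume ik: "i < 3" "k < 3"
    have "mm 3 UD (mm 3 V A) i k + mm 3 XY A i k = mm 3 (\<lambda>i m. mm 3 UD V i m + XY i m) A i k"
      by (simp add: mm_assoc mm_add_l)
    also have "\<dots> = mm 3 M A i k" using mm_beq[OF beq_sym[OF MM] beq_refl, of 3 A] ik by (simp add: beq_def)
    also have "\<dots> = mm 3 A' (mm 3 B A) i k" by (simp add: M_def mm_assoc)
    also have "\<dots> = mm 3 A' ev i k" using mm_beq[OF beq_refl BA', of 3 A'] ik by (simp add: beq_def)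
    also have "\<dots> = A' i k" using mm_ev_r ik by (simp add: beq_def)
    finally show "A' i k = (\<Sum>l<6. a l i * b l 1 * c l k)" using s1 by simp
  qed
  moreover have "\<forall>i<3. \<forall>k<3. A'' i k = (\<Sum>l<6. a l i * b l 2 * c l k)"
  proof (intro allI impI)
    fix i k :: nat assume ik: "i < 3" "k < 3"
    have UGd: "beq UG (mm 3 U Gd)"
      unfolding beq_def mm_def UG_def Gd_def all3 by (simp add: sum3)
    have e1: "mm 3 UG (mm 3 V A) i k + mm 2 (mm 3 U L) (mm 3 (mm 3 R V) A) i k
        = mm 3 (\<lambda>i n. mm 3 UG V i n + mm 3 (mm 3 U (mm 2 L R)) V i n) A i k"
      by (simp add: mm_assoc mm_add_l)
    have b1: "beq (\<lambda>i n. UG i n + mm 3 U (mm 2 L R) i n) (mm 3 U N)"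
    proof -
      have h1: "beq (\<lambda>i n. UG i n + mm 3 U (mm 2 L R) i n) (\<lambda>i n. mm 3 U Gd i n + mm 3 U (mm 2 L R) i n)"
        using UGd by (simp add: beq_def)
      have h2: "(\<lambda>i n. mm 3 U Gd i n + mm 3 U (mm 2 L R) i n) = mm 3 U (\<lambda>l n. Gd l n + mm 2 L R l n)"
        by (simp add: mm_def distrib_left sum.distrib)
      have h3: "beq (mm 3 U (\<lambda>l n. Gd l n + mm 2 L R l n)) (mm 3 U N)"
        by (rule mm_beq[OF beq_refl beq_sym[OF NN]]) simp
      show ?thesis using h1 h3 unfolding h2 by (rule beq_trans)
    qed
    have e2: "(\<lambda>i n. mm 3 UG V i n + mm 3 (mm 3 U (mm 2 L R)) V i n) = mm 3 (\<lambda>i n. UG i n + mm 3 U (mm 2 L R) i n) V"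
      by (simp add: mm_add_l)
    have b2: "beq (mm 3 (\<lambda>i n. UG i n + mm 3 U (mm 2 L R) i n) V) (mm 3 (mm 3 U N) V)"
      by (rule mm_beq[OF b1 beq_refl]) simp
    have b3: "mm 3 (mm 3 U N) V = mm 3 (mm 3 U V) (mm 3 (mm 3 A'' B) (mm 3 U V))"
      by (simp add: N_def mm_assoc)
    have b4: "beq (mm 3 (mm 3 U V) (mm 3 (mm 3 A'' B) (mm 3 U V))) (mm 3 A'' B)"
    proof -
      have "beq (mm 3 (mm 3 U V) (mm 3 (mm 3 A'' B) (mm 3 U V))) (mm 3 ev (mm 3 (mm 3 A'' B) ev))"
        by (rule mm_beq[OF UV mm_beq[OF beq_refl UV]]) simp_all
      moreover have "beq (mm 3 ev (mm 3 (mm 3 A'' B) ev)) (mm 3 A'' B)"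
        by (rule beq_trans[OF mm_ev_l mm_ev_r])
      ultimately show ?thesis by (rule beq_trans)
    qed
    have b5: "beq (mm 3 (\<lambda>i n. mm 3 UG V i n + mm 3 (mm 3 U (mm 2 L R)) V i n) A) (mm 3 (mm 3 A'' B) A)"
      unfolding e2 by (rule mm_beq[OF beq_trans[OF b2] beq_refl]) (simp_all add: b3 b4)
    have q1: "mm 3 (mm 3 A'' B) A = mm 3 A'' (mm 3 B A)" by (simp add: mm_assoc)
    have q2: "beq (mm 3 A'' (mm 3 B A)) A''"
      by (rule beq_trans[OF mm_beq[OF beq_refl BA'] mm_ev_r]) simp
    have "beq (mm 3 (\<lambda>i n. mm 3 UG V i n + mm 3 (mm 3 U (mm 2 L R)) V i n) A) A''"
      by (rule beq_trans[OF b5]) (simp only: q1 q2)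
    from beqD[OF this ik] have "mm 3 (\<lambda>i n. mm 3 UG V i n + mm 3 (mm 3 U (mm 2 L R)) V i n) A i k = A'' i k" .
    then show "A'' i k = (\<Sum>l<6. a l i * b l 2 * c l k)" by (simp only: s2 e1)
  qed
  ultimately have F: "\<forall>i<3. \<forall>k<3. A i k = (\<Sum>l<6. a l i * b l 0 * c l k) \<and> A' i k = (\<Sum>l<6. a l i * b l 1 * c l k) \<and>
     A'' i k = (\<Sum>l<6. a l i * b l 2 * c l k)" by simp
  show ?thesis by (rule exI[of _ a], rule exI[of _ b], rule exI[of _ c]) (rule F)
qed



lemma sum6': "(\<Sum>l<(6::nat). f l) = f 0 + f 1 + f 2 + f 3 + f 4 + f 5"
  by (simp add: eval_nat_numeral)

theorem mainTheorem16:
  fixes T :: qtensor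
  shows "qtensor_rank 3 3 3 T \<le> 6"
proof -
  define S where "S = (\<lambda>j i k. T i j k)"
  have D: "(\<exists>B. \<forall>i<3. \<forall>k<3. (\<Sum>l<3. B i l * S j l k) = ev i k) \<or>
         (\<exists>L R. \<forall>i<3. \<forall>k<3. S j i k = (\<Sum>m<(2::nat). L i m * R m k))" for j
    by (rule dichotomy)
  show ?thesis
  proof (cases "\<exists>B. \<forall>i<3. \<forall>k<3. (\<Sum>l<3. B i l * S 0 l k) = ev i k")
    case True
    then obtain B where B: "\<forall>i<3. \<forall>k<3. (\<Sum>l<3. B i l * S 0 l k) = ev i k" by blast
    obtain a b c :: "nat \<Rightarrow> nat \<Rightarrow> quat" where abc: "\<forall>i<3. \<forall>k<3.
     S 0 i k = (\<Sum>l<6. a l i * b l 0 * c l k) \<and> S 1 i k = (\<Sum>l<6. a l i * b l 1 * c l k) \<and>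
     S 2 i k = (\<Sum>l<6. a l i * b l 2 * c l k)"
      using assemble[OF B, of "S 1" "S 2"] by blast
    show ?thesis
    proof (rule rank_le_of_decomp[where a = a and b = b and c = c])
      show "\<forall>i<3. \<forall>j<3. \<forall>k<3. T i j k = (\<Sum>l<6. a l i * b l j * c l k)"
        using abc unfolding all3 by (simp add: S_def)
    qed
  next
    case F0: False
    show ?thesis
    proof (cases "\<exists>B. \<forall>i<3. \<forall>k<3. (\<Sum>l<3. B i l * S 1 l k) = ev i k")
      case True
      then obtain B where B: "\<forall>i<3. \<forall>k<3. (\<Sum>l<3. B i l * S 1 l k) = ev i k" by blast
      obtain a b c :: "nat \<Rightarrow> nat \<Rightarrow> quat" where abc: "\<forall>i<3. \<forall>k<3.
       S 1 i k = (\<Sum>l<6. a l i * b l 0 * c l k) \<and> S 0 i k = (\<Sum>l<6. a l i * b l 1 * c l k) \<and>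
       S 2 i k = (\<Sum>l<6. a l i * b l 2 * c l k)"
        using assemble[OF B, of "S 0" "S 2"] by blast
      show ?thesis
      proof (rule rank_le_of_decomp[where a = a and b = "\<lambda>l j. b l (if j = 0 then 1 else if j = 1 then 0 else 2)" and c = c])
        show "\<forall>i<3. \<forall>j<3. \<forall>k<3. T i j k = (\<Sum>l<6. a l i * (\<lambda>l j. b l (if j = 0 then 1 else if j = 1 then 0 else 2)) l j * c l k)"
          using abc unfolding all3 by (simp add: S_def)
      qed
    next
      case F1: False
      show ?thesis
      proof (cases "\<exists>B. \<forall>i<3. \<forall>k<3. (\<Sum>l<3. B i l * S 2 l k) = ev i k")
        case True
        then obtain B where B: "\<forall>i<3. \<forall>k<3. (\<Sum>l<3. B i l * S 2 l k) = ev i k" by blast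
        obtain a b c :: "nat \<Rightarrow> nat \<Rightarrow> quat" where abc: "\<forall>i<3. \<forall>k<3.
         S 2 i k = (\<Sum>l<6. a l i * b l 0 * c l k) \<and> S 0 i k = (\<Sum>l<6. a l i * b l 1 * c l k) \<and>
         S 1 i k = (\<Sum>l<6. a l i * b l 2 * c l k)"
          using assemble[OF B, of "S 0" "S 1"] by blast
        show ?thesis
        proof (rule rank_le_of_decomp[where a = a and b = "\<lambda>l j. b l (if j = 2 then 0 else if j = 0 then 1 else 2)" and c = c])
          show "\<forall>i<3. \<forall>j<3. \<forall>k<3. T i j k = (\<Sum>l<6. a l i * (\<lambda>l j. b l (if j = 2 then 0 else if j = 0 then 1 else 2)) l j * c l k)"
            using abc unfolding all3 by (simp add: S_def)
        qed
      next
        case F2: False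
        obtain L0 R0 where LR0: "\<forall>i<3. \<forall>k<3. S 0 i k = (\<Sum>m<(2::nat). L0 i m * R0 m k)"
          using D[of 0] F0 by blast
        obtain L1 R1 where LR1: "\<forall>i<3. \<forall>k<3. S 1 i k = (\<Sum>m<(2::nat). L1 i m * R1 m k)"
          using D[of 1] F1 by blast
        obtain L2 R2 where LR2: "\<forall>i<3. \<forall>k<3. S 2 i k = (\<Sum>m<(2::nat). L2 i m * R2 m k)"
          using D[of 2] F2 by blast
        define a where "a = (\<lambda>(l::nat) i. if l < 2 then L0 i l else if l < 4 then L1 i (l - 2) else L2 i (l - 4))"
        define c where "c = (\<lambda>(l::nat) k. if l < 2 then R0 l k else if l < 4 then R1 (l - 2) k else R2 (l - 4) k)"
        define b where "b = (\<lambda>(l::nat) (j::nat). if l < 2 then ev 0 j else if l < 4 then ev 1 j else ev 2 j)"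
        show ?thesis
        proof (rule rank_le_of_decomp[where a = a and b = b and c = c])
          show "\<forall>i<3. \<forall>j<3. \<forall>k<3. T i j k = (\<Sum>l<6. a l i * b l j * c l k)"
            using LR0 LR1 LR2 unfolding all3 by (simp add: S_def sum6' sum2 a_def b_def c_def ev_def)
        qed
      qed
    qed
  qed
qed


end
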